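(* Let $\tau>2$ and $\xi\in\mathcal{D}(\tau)$, let $\beta=e^{2i\pi\xi}$, $\varphi(z)=\beta z$, and consider the operator $C_\varphi$ on $\mathrm{Hol}(\mathbb{D})$ given by $C_\varphi f=f\circ\varphi$. Then $$\{\beta^n:n\in\mathbb{N}_0\}\subset\sigma(C_\varphi)\subset\{e^{2i\pi x}:x\in\mathbb{R}\setminus\mathbb{Q}\}\cup\{1\}.$$
   Context: $\mathbb{D}$ is the open unit disc, $\mathrm{Hol}(\mathbb{D})$ the Fréchet space of holomorphic functions on $\mathbb{D}$ (topology of uniform convergence on compact sets), $\mathbb{N}_0=\mathbb{N}\cup\{0\}$. For a linear operator $S$ on $\mathrm{Hol}(\mathbb{D})$, $\sigma(S)$ is the set of $\lambda\in\mathbb{C}$ such that $\lambda\mathrm{Id}-S$ is not bijective. For $\tau>2$, $\mathcal{D}(\tau)$ is the set of $\xi\in\mathbb{R}$ for which there exists $\gamma>0$ with $|p/q-\xi|\geq\gamma q^{-\tau}$ for all $p\in\mathbb{Z}$, $q\in\mathbb{N}$ (diophantine numbers of order $\tau$). *)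

theory Defs
  imports "HOL-Analysis.Analysis"
begin

text \<open>Hol(D) is represented by functions holomorphic on the unit disc that are
normalised to be 0 outside the disc, so that function equality coincides with
equality on the disc.\<close>
definition hol_disc :: "(complex \<Rightarrow> complex) set" where
  "hol_disc = {f. f holomorphic_on ball 0 1 \<and> (\<forall>z. z \<notin> ball 0 1 \<longrightarrow> f z = 0)}"

definition hol_spectrum ::
  "((complex \<Rightarrow> complex) \<Rightarrow> (complex \<Rightarrow> complex)) \<Rightarrow> complex set" where
  "hol_spectrum S = {l. \<not> bij_betw (\<lambda>f z. l * f z - S f z) hol_disc hol_disc}"

definition diophantine :: "real \<Rightarrow> real \<Rightarrow> bool" where
  "diophantine \<tau> \<xi> \<longleftrightarrow>
     (\<exists>\<gamma>>0. \<forall>(p::int) (q::nat). q > 0 \<longrightarrow>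
        \<bar>real_of_int p / real q - \<xi>\<bar> \<ge> \<gamma> * real q powr (-\<tau>))"

end

theory Submission imports Defs "HOL-Complex_Analysis.Complex_Analysis" "HOL-Real_Asymp.Real_Asymp" begin

lemma poly_geom_summable:
  fixes x M :: real
  assumes "0 \<le> x" "x < 1"
  shows "summable (\<lambda>n. (1 + real n) powr M * x ^ n)"
proof -
  have eq: "(\<lambda>n. norm ((1 + real n) powr M) / norm ((1 + real (Suc n)) powr M))
       = (\<lambda>n. ((1 + real n) / (2 + real n)) powr M)"
    by (auto simp: powr_divide add_ac)
  have "(\<lambda>n. (1 + real n) / (2 + real n)) \<longlonglongrightarrow> 1" by real_asymp
  then have "(\<lambda>n. ((1 + real n) / (2 + real n)) powr M) \<longlonglongrightarrow> 1 powr M"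
    by (intro tendsto_powr) auto
  then have lim: "(\<lambda>n. ((1 + real n) / (2 + real n)) powr M) \<longlonglongrightarrow> 1" by simp
  have "conv_radius (\<lambda>n. (1 + real n) powr M) = ereal 1"
    by (intro conv_radius_ratio_limit_nonzero[of _ 1]) (use lim in \<open>auto simp: eq powr_divide\<close>)
  then show ?thesis using assms
    by (intro summable_in_conv_radius) auto
qed

lemma exp_lower:
  "\<exists>c0>0. \<forall>s::real. \<bar>s\<bar> \<le> 1/2 \<longrightarrow> c0 * \<bar>s\<bar> \<le> norm (exp (2 * complex_of_real pi * \<i> * complex_of_real s) - 1)"
proof -
  define c1 where "c1 = 1 - cos (1/2::real)"
  have "cos (1/2::real) < cos 0"
    by (rule cos_monotone_0_pi) (use pi_gt3 in auto)
  then have c1: "c1 > 0" by (simp add: c1_def)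
  show ?thesis
  proof (intro exI[of _ "min 1 (2*c1)"] conjI allI impI)
    show "0 < min 1 (2*c1)" using c1 by simp
    fix s :: real assume s: "\<bar>s\<bar> \<le> 1/2"
    define z where "z = 2 * complex_of_real pi * \<i> * complex_of_real s"
    have nz: "norm z = 2 * pi * \<bar>s\<bar>" by (simp add: z_def norm_mult)
    show "min 1 (2*c1) * \<bar>s\<bar> \<le> norm (exp (2 * complex_of_real pi * \<i> * complex_of_real s) - 1)"
    proof (cases "norm z \<le> 1/2")
      case True
      have "1/2 * norm z \<le> norm (exp z - 1)" using norm_exp_bounds(1)[OF True] by simp
      moreover have "\<bar>s\<bar> \<le> 1/2 * norm z" using nz pi_gt3 mult_right_mono[of 1 pi "\<bar>s\<bar>"] by simp
      moreover have "min 1 (2*c1) * \<bar>s\<bar> \<le> \<bar>s\<bar>" using mult_right_mono[of "min 1 (2*c1)" 1 "\<bar>s\<bar>"] by simp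
      ultimately show ?thesis unfolding z_def by linarith
    next
      case False
      define th where "th = 2 * pi * s"
      have th: "1/2 < \<bar>th\<bar>" "\<bar>th\<bar> \<le> pi" using False nz s pi_gt3 by (auto simp: th_def abs_mult)
      have "cos \<bar>th\<bar> \<le> cos (1/2)"
        by (rule cos_monotone_0_pi_le) (use th in auto)
      then have "c1 \<le> 1 - cos th" by (simp add: c1_def)
      also have "1 - cos th = \<bar>Re (exp z - 1)\<bar>"
        using cos_le_one[of th] by (simp add: z_def th_def Re_exp)
      also have "\<dots> \<le> norm (exp z - 1)" by (rule abs_Re_le_cmod)
      finally have "c1 \<le> norm (exp z - 1)" .
      moreover have "min 1 (2*c1) * \<bar>s\<bar> \<le> c1"
      proof -
        have "min 1 (2*c1) * \<bar>s\<bar> \<le> (2*c1) * \<bar>s\<bar>" by (intro mult_right_mono) auto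
        also have "\<dots> \<le> 2 * c1 * (1/2)" using s c1 by (intro mult_left_mono) auto
        finally show ?thesis by simp
      qed
      ultimately show ?thesis unfolding z_def by linarith
    qed
  qed
qed


lemma op_maps:
  fixes \<beta> l :: complex
  assumes nb: "norm \<beta> = 1" and f: "f \<in> hol_disc"
  shows "(\<lambda>z. l * f z - (f \<circ> (\<lambda>z. \<beta> * z)) z) \<in> hol_disc"
proof -
  have hf: "f holomorphic_on ball 0 1" and f0: "\<And>z. z \<notin> ball 0 1 \<Longrightarrow> f z = 0"
    using f by (auto simp: hol_disc_def)
  have nm: "\<And>z. norm (\<beta> * z) = norm z" by (simp add: norm_mult nb)
  have "(\<lambda>z. \<beta> * z) ` ball 0 1 \<subseteq> ball 0 1" using nm by auto
  then have "f \<circ> (\<lambda>z. \<beta> * z) holomorphic_on ball 0 1"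
    by (intro holomorphic_on_compose holomorphic_intros holomorphic_on_subset[OF hf])
  then have "(\<lambda>z. l * f z - (f \<circ> (\<lambda>z. \<beta> * z)) z) holomorphic_on ball 0 1"
    by (intro holomorphic_intros hf) (simp add: o_def)
  moreover have "\<forall>z. z \<notin> ball 0 1 \<longrightarrow> l * f z - (f \<circ> (\<lambda>z. \<beta> * z)) z = 0"
    using f0 nm by (auto simp: o_def)
  ultimately show ?thesis by (simp add: hol_disc_def)
qed

lemma op_bij:
  fixes \<beta> l :: complex and c M :: real
  assumes nb: "norm \<beta> = 1" and c: "c > 0"
    and bd: "\<And>n. c \<le> norm (l - \<beta> ^ n) * (1 + real n) powr M"
  shows "bij_betw (\<lambda>f z. l * f z - (f \<circ> (\<lambda>z. \<beta> * z)) z) hol_disc hol_disc"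
proof -
  define S where "S = (\<lambda>f z. l * f z - (f \<circ> (\<lambda>z. \<beta> * z)) z)"
  have nz: "l - \<beta> ^ n \<noteq> 0" for n
    using bd[of n] c by auto
  have nm: "\<And>z. norm (\<beta> * z) = norm z" by (simp add: norm_mult nb)
  have inj: "inj_on S hol_disc"
  proof (rule inj_onI)
    fix f h assume f: "f \<in> hol_disc" and h: "h \<in> hol_disc" and eqS: "S f = S h"
    define d where "d = (\<lambda>z. f z - h z)"
    have hd: "d holomorphic_on ball 0 1"
      using f h by (auto simp: hol_disc_def d_def intro!: holomorphic_intros)
    have eq: "d (\<beta> * z) = l * d z" for z
      using fun_cong[OF eqS, of z] by (simp add: S_def d_def algebra_simps)
    have hd2: "(\<lambda>w. d (\<beta> * w)) holomorphic_on ball 0 1"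
    proof -
      have "(\<lambda>z. \<beta> * z) ` ball 0 1 \<subseteq> ball 0 1" using nm by auto
      then have "d \<circ> (\<lambda>z. \<beta> * z) holomorphic_on ball 0 1"
        by (intro holomorphic_on_compose holomorphic_intros holomorphic_on_subset[OF hd])
      then show ?thesis by (simp add: o_def)
    qed
    have D: "(deriv ^^ n) d 0 = 0" for n
    proof -
      have 1: "(deriv ^^ n) (\<lambda>w. d (\<beta> * w)) 0 = \<beta> ^ n * (deriv ^^ n) d (\<beta> * 0)"
        by (rule higher_deriv_compose_linear[where S="ball 0 1", OF hd]) (simp_all add: nm)
      have 2: "(deriv ^^ n) (\<lambda>w. d (\<beta> * w)) 0 = (deriv ^^ n) (\<lambda>w. l * d w) 0"
        by (rule higher_deriv_transform_within_open[OF hd2 _ open_ball]) (auto simp: eq hd holomorphic_intros)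
      have 3: "(deriv ^^ n) (\<lambda>w. l * d w) 0 = l * (deriv ^^ n) d 0"
        by (rule higher_deriv_cmult[OF hd]) auto
      have "(l - \<beta> ^ n) * (deriv ^^ n) d 0 = 0" using 1 2 3 by (simp add: left_diff_distrib)
      then show ?thesis using nz[of n] by simp
    qed
    have dz: "d z = 0" if "z \<in> ball 0 1" for z
    proof -
      have "(\<lambda>n. (deriv ^^ n) d 0 / fact n * (z - 0) ^ n) sums d z"
        by (rule holomorphic_power_series[OF hd that])
      then have "(\<lambda>n. 0) sums d z" by (simp add: D)
      from sums_unique2[OF this sums_zero] show ?thesis .
    qed
    show "f = h"
    proof
      fix z
      show "f z = h z"
      proof (cases "z \<in> ball 0 1")
        case True
        then show ?thesis using dz[OF True] by (simp add: d_def)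
      next
        case False
        then show ?thesis using f h by (simp add: hol_disc_def)
      qed
    qed
  qed
  have surj: "hol_disc \<subseteq> S ` hol_disc"
  proof
    fix g assume g: "g \<in> hol_disc"
    have hg: "g holomorphic_on ball 0 1" and g0: "\<And>z. z \<notin> ball 0 1 \<Longrightarrow> g z = 0"
      using g by (auto simp: hol_disc_def)
    define b where "b n = (deriv ^^ n) g 0 / fact n" for n
    define a where "a n = b n / (l - \<beta> ^ n)" for n
    have gs: "(\<lambda>n. b n * w ^ n) sums g w" if "w \<in> ball 0 1" for w
      using holomorphic_power_series[OF hg that] by (simp add: b_def)
    have summ: "summable (\<lambda>n. a n * w ^ n)" if w: "w \<in> ball 0 1" for w
    proof -
      define r where "r = (1 + norm w) / 2"
      have nw: "norm w < 1" using w by simp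
      have r1: "norm w < r" using nw unfolding r_def by (simp add: field_simps)
      have r2: "r < 1" using nw unfolding r_def by (simp add: field_simps)
      have r3: "0 < r" unfolding r_def by (intro divide_pos_pos add_pos_nonneg) auto
      note r = r1 r2 r3
      have "complex_of_real r \<in> ball 0 1" using r by simp
      from gs[OF this] have "summable (\<lambda>n. b n * complex_of_real r ^ n)" by (rule sums_summable)
      then have "(\<lambda>n. b n * complex_of_real r ^ n) \<longlonglongrightarrow> 0" by (rule summable_LIMSEQ_zero)
      then have "Bseq (\<lambda>n. b n * complex_of_real r ^ n)" by (intro convergent_imp_Bseq convergentI)
      then obtain B where B: "B > 0" "\<And>n. norm (b n * complex_of_real r ^ n) \<le> B"
        by (auto elim!: BseqE)
      have sg: "summable (\<lambda>n. B / c * ((1 + real n) powr M * (norm w / r) ^ n))"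
        using r by (intro summable_mult poly_geom_summable) auto
      show ?thesis
      proof (rule summable_comparison_test[OF _ sg], intro exI allI impI)
        fix n :: nat
        have nl: "norm (l - \<beta> ^ n) > 0" using nz[of n] by simp
        have i1: "1 / norm (l - \<beta> ^ n) \<le> (1 + real n) powr M / c"
          using bd[of n] nl c by (simp add: field_simps)
        have i2: "norm (b n) * norm w ^ n \<le> B * (norm w / r) ^ n"
        proof -
          have "norm (b n) * norm w ^ n = norm (b n * complex_of_real r ^ n) * (norm w / r) ^ n"
            using r by (simp add: norm_mult norm_power power_divide abs_of_pos)
          also have "\<dots> \<le> B * (norm w / r) ^ n"
            using B(2)[of n] r(3) by (intro mult_right_mono zero_le_power divide_nonneg_pos norm_ge_zero) auto
          finally show ?thesis .
        qed
        have "norm (a n * w ^ n) = (norm (b n) * norm w ^ n) * (1 / norm (l - \<beta> ^ n))"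
          by (simp add: a_def norm_mult norm_divide norm_power)
        also have "\<dots> \<le> (B * (norm w / r) ^ n) * ((1 + real n) powr M / c)"
        proof (rule mult_mono[OF i2 i1])
          show "0 \<le> B * (norm w / r) ^ n" using B(1) r(3)
            by (intro mult_nonneg_nonneg zero_le_power divide_nonneg_pos norm_ge_zero) auto
          show "0 \<le> 1 / norm (l - \<beta> ^ n)" by simp
        qed
        also have "\<dots> = B / c * ((1 + real n) powr M * (norm w / r) ^ n)" by simp
        finally show "norm (a n * w ^ n) \<le> B / c * ((1 + real n) powr M * (norm w / r) ^ n)" .
      qed
    qed
    define F where "F w = (if w \<in> ball 0 1 then suminf (\<lambda>n. a n * w ^ n) else 0)" for w
    have Fs: "(\<lambda>n. a n * w ^ n) sums F w" if "w \<in> ball 0 1" for w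
      using summ[OF that] that by (simp add: F_def summable_sums)
    have hF: "F holomorphic_on ball 0 1"
      by (rule power_series_holomorphic[where a=a]) (use Fs in simp)
    have F: "F \<in> hol_disc" using hF by (simp add: hol_disc_def F_def)
    have "S F = g"
    proof
      fix z
      show "S F z = g z"
      proof (cases "z \<in> ball 0 1")
        case True
        then have bz: "\<beta> * z \<in> ball 0 1" using nm by simp
        have s1: "(\<lambda>n. l * (a n * z ^ n)) sums (l * F z)" by (rule sums_mult[OF Fs[OF True]])
        have s2: "(\<lambda>n. a n * (\<beta> * z) ^ n) sums F (\<beta> * z)" by (rule Fs[OF bz])
        have "(\<lambda>n. l * (a n * z ^ n) - a n * (\<beta> * z) ^ n) sums (l * F z - F (\<beta> * z))"
          by (rule sums_diff[OF s1 s2])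
        moreover have "l * (a n * z ^ n) - a n * (\<beta> * z) ^ n = b n * z ^ n" for n
        proof -
          have "l * (a n * z ^ n) - a n * (\<beta> * z) ^ n = ((l - \<beta> ^ n) * a n) * z ^ n"
            by (simp add: power_mult_distrib algebra_simps)
          also have "\<dots> = b n * z ^ n" using nz[of n] by (simp add: a_def)
          finally show ?thesis .
        qed
        ultimately have "(\<lambda>n. b n * z ^ n) sums (l * F z - F (\<beta> * z))" by simp
        with gs[OF True] have "g z = l * F z - F (\<beta> * z)" by (rule sums_unique2)
        then show ?thesis by (simp add: S_def)
      next
        case False
        then show ?thesis using g0 nm by (simp add: S_def F_def)
      qed
    qed
    then show "g \<in> S ` hol_disc" using F by blast
  qed
  have "S ` hol_disc \<subseteq> hol_disc" using op_maps[OF nb] by (auto simp: S_def)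
  with inj surj show ?thesis unfolding S_def[symmetric] bij_betw_def by blast
qed


lemma rat_bound:
  fixes \<xi> \<tau> \<gamma> c0 :: real and p :: int and q n :: nat
  assumes \<gamma>: "\<gamma> > 0" and c0: "c0 > 0"
    and el: "\<forall>s::real. \<bar>s\<bar> \<le> 1/2 \<longrightarrow> c0 * \<bar>s\<bar> \<le> norm (exp (2 * complex_of_real pi * \<i> * complex_of_real s) - 1)"
    and dio: "\<forall>(P::int) (Q::nat). Q > 0 \<longrightarrow> \<bar>real_of_int P / real Q - \<xi>\<bar> \<ge> \<gamma> * real Q powr (-\<tau>)"
    and q: "q > 0" and n: "n > 0" and \<tau>: "\<tau> > 2"
  shows "c0 * \<gamma> * real q powr (-\<tau>) \<le>
     norm (exp (2 * complex_of_real pi * \<i> * complex_of_real (real_of_int p / real q))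
       - exp (2 * complex_of_real pi * \<i> * complex_of_real \<xi>) ^ n) * (1 + real n) powr (\<tau> - 1)"
proof -
  define x where "x = real_of_int p / real q"
  define t where "t = x - real n * \<xi>"
  define k where "k = round t"
  define s where "s = t - real_of_int k"
  have s: "\<bar>s\<bar> \<le> 1/2" using of_int_round_ge[of t] of_int_round_le[of t] unfolding s_def k_def abs_le_iff by linarith
  define E where "E = (\<lambda>y::real. exp (2 * complex_of_real pi * \<i> * complex_of_real y))"
  have Eadd: "E (a + b) = E a * E b" for a b
    by (simp add: E_def distrib_left distrib_right flip: exp_add)
  have Eint: "E (real_of_int m) = 1" for m
    using exp_integer_2pi[of "of_int m"] by (simp add: E_def mult_ac)
  have En: "E \<xi> ^ n = E (real n * \<xi>)"
    by (simp add: E_def flip: exp_of_nat_mult) (simp add: mult_ac)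
  have nE: "norm (E y) = 1" for y by (simp add: E_def)
  have "x = real n * \<xi> + s + real_of_int k" by (simp add: s_def t_def)
  then have "E x = E (real n * \<xi>) * E s" by (simp add: Eadd Eint)
  then have "E x - E \<xi> ^ n = E (real n * \<xi>) * (E s - 1)" by (simp add: En algebra_simps)
  then have N: "norm (E x - E \<xi> ^ n) = norm (E s - 1)" by (simp add: norm_mult nE)
  have c0s: "c0 * \<bar>s\<bar> \<le> norm (E s - 1)" using el s by (simp add: E_def)
  define P where "P = p - int q * k"
  define Q where "Q = q * n"
  have Q: "Q > 0" using q n by (simp add: Q_def)
  have "s = real n * (real_of_int P / real Q - \<xi>)"
    using q n by (simp add: s_def t_def x_def P_def Q_def field_simps)
  then have "\<bar>s\<bar> = real n * \<bar>real_of_int P / real Q - \<xi>\<bar>" by (simp add: abs_mult)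
  moreover have "\<bar>real_of_int P / real Q - \<xi>\<bar> \<ge> \<gamma> * real Q powr (-\<tau>)" using dio Q by blast
  ultimately have "\<bar>s\<bar> \<ge> real n * (\<gamma> * real Q powr (-\<tau>))" by (simp add: mult_left_mono)
  also have "real n * (\<gamma> * real Q powr (-\<tau>)) = \<gamma> * real q powr (-\<tau>) * real n powr (1 - \<tau>)"
    using q n by (simp add: Q_def powr_mult powr_diff powr_minus field_simps)
  finally have sb: "\<gamma> * real q powr (-\<tau>) * real n powr (1 - \<tau>) \<le> \<bar>s\<bar>" .
  have "real n powr (1 - \<tau>) * (1 + real n) powr (\<tau> - 1) \<ge> real n powr (1 - \<tau>) * real n powr (\<tau> - 1)"
    using n \<tau> by (intro mult_left_mono powr_mono2) auto
  also have "real n powr (1 - \<tau>) * real n powr (\<tau> - 1) = 1"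
    using n by (simp flip: powr_add)
  finally have pn: "1 \<le> real n powr (1 - \<tau>) * (1 + real n) powr (\<tau> - 1)" .
  have "c0 * \<gamma> * real q powr (-\<tau>) \<le> c0 * \<gamma> * real q powr (-\<tau>) * (real n powr (1 - \<tau>) * (1 + real n) powr (\<tau> - 1))"
    using mult_left_mono[OF pn, of "c0 * \<gamma> * real q powr (-\<tau>)"] c0 \<gamma> by simp
  also have "\<dots> = c0 * (\<gamma> * real q powr (-\<tau>) * real n powr (1 - \<tau>)) * (1 + real n) powr (\<tau> - 1)"
    by (simp add: mult_ac)
  also have "\<dots> \<le> c0 * \<bar>s\<bar> * (1 + real n) powr (\<tau> - 1)"
    using sb c0 by (intro mult_right_mono mult_left_mono) auto
  also have "\<dots> \<le> norm (E s - 1) * (1 + real n) powr (\<tau> - 1)"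
    using c0s by (intro mult_right_mono) auto
  finally show ?thesis using N by (simp add: E_def x_def)
qed


theorem theorem4p2:
  fixes \<tau> \<xi> :: real and \<beta> :: complex
  assumes "\<tau> > 2" and "diophantine \<tau> \<xi>"
    and "\<beta> = exp (2 * complex_of_real pi * \<i> * complex_of_real \<xi>)"
  shows "{\<beta> ^ n | n::nat. True} \<subseteq> hol_spectrum (\<lambda>f. f \<circ> (\<lambda>z. \<beta> * z))
       \<and> hol_spectrum (\<lambda>f. f \<circ> (\<lambda>z. \<beta> * z))
           \<subseteq> {exp (2 * complex_of_real pi * \<i> * complex_of_real x) | x::real. x \<notin> \<rat>} \<union> {1}"
proof
  have nb: "norm \<beta> = 1" using assms(3) by simp
  have nm: "\<And>z. norm (\<beta> * z) = norm z" by (simp add: norm_mult nb)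
  show "{\<beta> ^ n | n::nat. True} \<subseteq> hol_spectrum (\<lambda>f. f \<circ> (\<lambda>z. \<beta> * z))"
  proof safe
    fix n :: nat
    define f0 where "f0 z = (if z \<in> ball 0 1 then z ^ n else 0)" for z :: complex
    have "f0 holomorphic_on ball 0 1"
      by (rule holomorphic_transform[of "\<lambda>z. z ^ n"]) (auto simp: f0_def holomorphic_intros)
    then have f0h: "f0 \<in> hol_disc" by (simp add: hol_disc_def f0_def)
    have z0: "(\<lambda>z. 0) \<in> hol_disc" by (simp add: hol_disc_def holomorphic_intros)
    have e1: "(\<lambda>z. \<beta> ^ n * f0 z - (f0 \<circ> (\<lambda>z. \<beta> * z)) z) = (\<lambda>z. \<beta> ^ n * 0 - ((\<lambda>z. 0) \<circ> (\<lambda>z. \<beta> * z)) z)"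
      by (auto simp: f0_def nm power_mult_distrib)
    have ne: "f0 \<noteq> (\<lambda>z. 0)"
    proof
      assume "f0 = (\<lambda>z. 0)"
      then have "f0 (1/2) = 0" by simp
      then show False by (simp add: f0_def)
    qed
    have "\<not> inj_on (\<lambda>f z. \<beta> ^ n * f z - (f \<circ> (\<lambda>z. \<beta> * z)) z) hol_disc"
    proof
      assume inj: "inj_on (\<lambda>f z. \<beta> ^ n * f z - (f \<circ> (\<lambda>z. \<beta> * z)) z) hol_disc"
      have "f0 = (\<lambda>z. 0)" by (rule inj_onD[OF inj _ f0h z0]) (simp only: e1)
      with ne show False ..
    qed
    then show "\<beta> ^ n \<in> hol_spectrum (\<lambda>f. f \<circ> (\<lambda>z. \<beta> * z))"
      by (simp add: hol_spectrum_def bij_betw_def)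
  qed
  show "hol_spectrum (\<lambda>f. f \<circ> (\<lambda>z. \<beta> * z))
           \<subseteq> {exp (2 * complex_of_real pi * \<i> * complex_of_real x) | x::real. x \<notin> \<rat>} \<union> {1}"
  proof
    fix l assume ls: "l \<in> hol_spectrum (\<lambda>f. f \<circ> (\<lambda>z. \<beta> * z))"
    then have nbij: "\<not> bij_betw (\<lambda>f z. l * f z - (f \<circ> (\<lambda>z. \<beta> * z)) z) hol_disc hol_disc"
      by (simp add: hol_spectrum_def)
    show "l \<in> {exp (2 * complex_of_real pi * \<i> * complex_of_real x) | x::real. x \<notin> \<rat>} \<union> {1}"
    proof (rule ccontr)
      assume nl: "l \<notin> {exp (2 * complex_of_real pi * \<i> * complex_of_real x) | x::real. x \<notin> \<rat>} \<union> {1}"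
      then have l1: "l \<noteq> 1" by auto
      show False
      proof (cases "norm l = 1")
        case False
        have "bij_betw (\<lambda>f z. l * f z - (f \<circ> (\<lambda>z. \<beta> * z)) z) hol_disc hol_disc"
        proof (rule op_bij[OF nb, of "\<bar>norm l - 1\<bar>" l 0])
          show "0 < \<bar>norm l - 1\<bar>" using False by simp
          fix n :: nat
          have "\<bar>norm l - norm (\<beta> ^ n)\<bar> \<le> norm (l - \<beta> ^ n)" by (rule norm_triangle_ineq3)
          then show "\<bar>norm l - 1\<bar> \<le> norm (l - \<beta> ^ n) * (1 + real n) powr 0"
            by (simp add: norm_power nb)
        qed
        with nbij show False by simp
      next
        case True
        then have l0: "l \<noteq> 0" by auto
        define x where "x = Arg l / (2 * pi)"
        have lx: "l = exp (2 * complex_of_real pi * \<i> * complex_of_real x)"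
          using Arg_eq[OF l0] True by (simp add: x_def mult_ac)
        have "x \<in> \<rat>" using nl lx by blast
        then obtain p qi where qi: "qi > 0" and xpq: "x = of_int p / of_int qi" by (auto elim: Rats_cases')
        define q where "q = nat qi"
        have q: "q > 0" and xq: "x = real_of_int p / real q" using qi xpq by (auto simp: q_def)
        obtain \<gamma> where \<gamma>: "\<gamma> > 0" and dio: "\<forall>(P::int) (Q::nat). Q > 0 \<longrightarrow> \<bar>real_of_int P / real Q - \<xi>\<bar> \<ge> \<gamma> * real Q powr (-\<tau>)"
          using assms(2) by (auto simp: diophantine_def)
        obtain c0 where c0: "c0 > 0" and el: "\<forall>s::real. \<bar>s\<bar> \<le> 1/2 \<longrightarrow> c0 * \<bar>s\<bar> \<le> norm (exp (2 * complex_of_real pi * \<i> * complex_of_real s) - 1)"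
          using exp_lower by blast
        define c where "c = min (norm (l - 1)) (c0 * \<gamma> * real q powr (-\<tau>))"
        have "bij_betw (\<lambda>f z. l * f z - (f \<circ> (\<lambda>z. \<beta> * z)) z) hol_disc hol_disc"
        proof (rule op_bij[OF nb, of c l "\<tau> - 1"])
          show "0 < c" using l1 c0 \<gamma> q by (simp add: c_def)
          fix n :: nat
          show "c \<le> norm (l - \<beta> ^ n) * (1 + real n) powr (\<tau> - 1)"
          proof (cases "n = 0")
            case True then show ?thesis by (simp add: c_def)
          next
            case False
            have "c0 * \<gamma> * real q powr (-\<tau>) \<le> norm (l - \<beta> ^ n) * (1 + real n) powr (\<tau> - 1)"
              using rat_bound[OF \<gamma> c0 el dio q _ assms(1), of n p] False
              by (simp add: lx xq assms(3))
            then show ?thesis by (simp add: c_def)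
          qed
        qed
        with nbij show False by simp
      qed
    qed
  qed
qed

end
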